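(* Let $B$ be a nonzero proper Borel ideal of $S=k[x_1,\dots,x_n]$ generated in degrees at most $d$. For $0\le s\le d-1$ let $M_s$ be the set of monomials of degree $s$ that are minimal monomial generators of $\operatorname{trunc}_s(B)$ and do not lie in $B$, and for $m\in M_s$ let $Z_m=\{x_j: mx_j\notin\operatorname{trunc}_{s+1}(B)\}$. Then, as $k$-vector spaces, \[S/B=\bigoplus_{s=0}^{d-1}\ \bigoplus_{m\in M_s} m\cdot k[Z_m],\] i.e. the set of monomials of $S$ not in $B$ is the disjoint union over $s$ and $m\in M_s$ of the sets $\{mu: u \text{ a monomial in the variables } Z_m\}$, and none of these monomials lies in $B$.
   Context: For a monomial $m$ with factorization $x_{i_1}\cdots x_{i_r}$ ($i_1\le\dots\le i_r$), $\operatorname{trunc}_d(m)=x_{i_1}\cdots x_{i_d}$ if $d\le r$ and $=m$ if $d>r$; for a monomial ideal $I$, $\operatorname{trunc}_d(I)$ is the ideal generated by the $d$-truncations of the monomials of $I$; in particular $\operatorname{trunc}_0(B)=(1)$. A Borel ideal is a monomial ideal closed under Borel moves $m\mapsto m\frac{x_{i_1}}{x_{j_1}}\cdots\frac{x_{i_s}}{x_{j_s}}$ ($i_t<j_t$, all $x_{j_t}\mid m$). For a monomial $f$ and a set $Z$ of variables, $f\cdot k[Z]$ is the $k$-span of $\{fu : u$ a monomial in $Z\}$. *)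

theory Defs
  imports Main "HOL-Library.Multiset" "HOL-Library.Disjoint_Sets"
begin

(* A monomial of S = k[x_0,...,x_{n-1}] is represented by the multiset of
 indices of its variables (x_{i_1}...x_{i_r} corresponds to {#i_1,...,i_r#}).
 Divisibility is multiset inclusion, multiplication is multiset sum,
 degree is size, 1 is the empty multiset. *)

definition monoms :: "nat \<Rightarrow> nat multiset set" where
  "monoms n = {m. \<forall>i\<in>#m. i < n}"

(* A monomial ideal is identified with its set of monomials. *)
definition monomial_ideal :: "nat \<Rightarrow> nat multiset set \<Rightarrow> bool" where
  "monomial_ideal n I \<longleftrightarrow> I \<subseteq> monoms n \<and>
     (\<forall>m\<in>I. \<forall>u\<in>monoms n. m + u \<in> I)"

definition ideal_gen :: "nat \<Rightarrow> nat multiset set \<Rightarrow> nat multiset set" where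
  "ideal_gen n G = {m \<in> monoms n. \<exists>g\<in>G. g \<subseteq># m}"

(* Borel move: replace variables x_{j_t} (whose product divides m) by x_{i_t}, i_t < j_t. *)
definition borel_move :: "nat multiset \<Rightarrow> (nat \<times> nat) list \<Rightarrow> nat multiset" where
  "borel_move m ps = m - mset (map snd ps) + mset (map fst ps)"

definition borel_ideal :: "nat \<Rightarrow> nat multiset set \<Rightarrow> bool" where
  "borel_ideal n B \<longleftrightarrow> monomial_ideal n B \<and>
     (\<forall>m\<in>B. \<forall>ps. (\<forall>(i,j)\<in>set ps. i < j) \<and> mset (map snd ps) \<subseteq># m
        \<longrightarrow> borel_move m ps \<in> B)"

definition generated_in_degrees_le :: "nat multiset set \<Rightarrow> nat \<Rightarrow> bool" where
  "generated_in_degrees_le I d \<longleftrightarrow> (\<forall>m\<in>I. \<exists>g\<in>I. g \<subseteq># m \<and> size g \<le> d)"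

definition trunc :: "nat \<Rightarrow> nat multiset \<Rightarrow> nat multiset" where
  "trunc d m = mset (take d (sorted_list_of_multiset m))"

definition trunc_ideal :: "nat \<Rightarrow> nat \<Rightarrow> nat multiset set \<Rightarrow> nat multiset set" where
  "trunc_ideal n d I = ideal_gen n (trunc d ` I)"

definition min_gens :: "nat multiset set \<Rightarrow> nat multiset set" where
  "min_gens I = {m \<in> I. \<forall>m'\<in>I. m' \<subseteq># m \<longrightarrow> m' = m}"

definition Mset :: "nat \<Rightarrow> nat multiset set \<Rightarrow> nat \<Rightarrow> nat multiset set" where
  "Mset n B s = {m \<in> min_gens (trunc_ideal n s B). size m = s \<and> m \<notin> B}"

definition Zvars :: "nat \<Rightarrow> nat multiset set \<Rightarrow> nat \<Rightarrow> nat multiset \<Rightarrow> nat set" where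
  "Zvars n B s m = {j. j < n \<and> m + {#j#} \<notin> trunc_ideal n (Suc s) B}"

definition cell :: "nat multiset \<Rightarrow> nat set \<Rightarrow> nat multiset set" where
  "cell m Z = {m + u | u. set_mset u \<subseteq> Z}"

end

theory Submission
  imports Defs
begin

definition cnt :: "nat \<Rightarrow> nat multiset \<Rightarrow> nat" where
  "cnt x m = size (filter_mset (\<lambda>y. y \<le> x) m)"

definition dom :: "nat multiset \<Rightarrow> nat multiset \<Rightarrow> bool" where
  "dom a b \<longleftrightarrow> size a \<le> size b \<and> (\<forall>x. cnt x a \<le> cnt x b)"

lemma cnt_mset: "cnt x (mset xs) = length (filter (\<lambda>y. y \<le> x) xs)"
  unfolding cnt_def by (metis mset_filter size_mset)

lemma cnt_plus[simp]: "cnt x (a + b) = cnt x a + cnt x b"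
  unfolding cnt_def by simp

lemma cnt_single[simp]: "cnt x {#j#} = (if j \<le> x then 1 else 0)"
  unfolding cnt_def by simp

lemma cnt_add_mset[simp]: "cnt x (add_mset j m) = cnt x m + (if j \<le> x then 1 else 0)"
  unfolding cnt_def by simp

lemma cnt_le_size: "cnt x a \<le> size a"
  unfolding cnt_def by simp

lemma cnt_mono: "a \<subseteq># b \<Longrightarrow> cnt x a \<le> cnt x b"
  unfolding cnt_def by (simp add: multiset_filter_mono size_mset_mono)

lemma cnt_eq_size: "cnt x a = size a \<Longrightarrow> y \<in># a \<Longrightarrow> y \<le> x"
proof (rule ccontr)
  assume h: "cnt x a = size a" "y \<in># a" "\<not> y \<le> x"
  then have "size (filter_mset (\<lambda>y. y \<le> x) a) < size a"
    by (intro size_filter_unsat_elem) auto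
  then show False using h(1) unfolding cnt_def by simp
qed

lemma cnt_zero: "(\<And>y. y \<in># a \<Longrightarrow> x < y) \<Longrightarrow> cnt x a = 0"
  unfolding cnt_def by (auto simp: not_le)

lemma count_cnt0: "count a 0 = cnt 0 a"
proof (induction a)
  case empty
  then show ?case by (simp add: cnt_def)
next
  case (add z a)
  then show ?case unfolding cnt_def by simp
qed
lemma count_cntS: "count a (Suc y) + cnt y a = cnt (Suc y) a"
proof (induction a)
  case empty
  then show ?case by (simp add: cnt_def)
next
  case (add z a)
  have eq: "cnt x (add_mset z a) = cnt x a + (if z \<le> x then 1 else 0)" for x
    unfolding cnt_def by simp
  show ?case
    using add.IH eq[of y] eq[of "Suc y"] by (cases "z \<le> y"; cases "z = Suc y") auto
qed
lemma cnt_ext: "(\<And>x. cnt x a = cnt x b) \<Longrightarrow> a = b"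
proof (rule multiset_eqI)
  fix y assume h: "\<And>x. cnt x a = cnt x b"
  show "count a y = count b y"
  proof (cases y)
    case 0 then show ?thesis using count_cnt0[of a] count_cnt0[of b] h by simp
  next
    case (Suc y') then show ?thesis using count_cntS[of a y'] count_cntS[of b y'] h[of y'] h[of y]
      by simp
  qed
qed

lemma sorted_nth_le_iff:
  "sorted (xs::nat list) \<Longrightarrow> i < length xs \<Longrightarrow> (xs ! i \<le> x) = (i < length (filter (\<lambda>y. y \<le> x) xs))"
proof (induction xs arbitrary: i)
  case Nil
  then show ?case by simp
next
  case (Cons a xs)
  have sx: "sorted xs" and ax: "\<forall>y\<in>set xs. a \<le> y" using Cons.prems(1) by simp_all
  show ?case
  proof (cases "a \<le> x")
    case True
    have fe: "filter (\<lambda>y. y \<le> x) (a # xs) = a # filter (\<lambda>y. y \<le> x) xs" using True by simp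
    show ?thesis
    proof (cases i)
      case 0 then show ?thesis using True fe by simp
    next
      case (Suc j)
      then have "j < length xs" using Cons.prems(2) by simp
      then have "(xs ! j \<le> x) = (j < length (filter (\<lambda>y. y \<le> x) xs))" using Cons.IH[OF sx] by blast
      then show ?thesis using Suc fe by simp
    qed
  next
    case False
    have fe: "filter (\<lambda>y. y \<le> x) (a # xs) = []" using False ax by (auto simp: filter_empty_conv)
    have "a \<le> (a # xs) ! i"
    proof (cases i)
      case 0 then show ?thesis by simp
    next
      case (Suc j)
      then have "j < length xs" using Cons.prems(2) by simp
      then have "xs ! j \<in> set xs" by (rule nth_mem)
      then show ?thesis using ax Suc by simp
    qed
    then have "\<not> (a # xs) ! i \<le> x" using False order_trans by blast
    then show ?thesis using fe by simp
  qed
qed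

lemma sorted_filter_take:
  "sorted (xs::nat list) \<Longrightarrow> length (filter (\<lambda>y. y \<le> x) (take k xs)) = min k (length (filter (\<lambda>y. y \<le> x) xs))"
proof (induction xs arbitrary: k)
  case Nil
  then show ?case by simp
next
  case (Cons a xs)
  have sx: "sorted xs" and ax: "\<forall>y\<in>set xs. a \<le> y" using Cons.prems(1) by simp_all
  show ?case
  proof (cases k)
    case 0 then show ?thesis by simp
  next
    case (Suc k')
    show ?thesis
    proof (cases "a \<le> x")
      case True
      have "length (filter (\<lambda>y. y \<le> x) (take k' xs)) = min k' (length (filter (\<lambda>y. y \<le> x) xs))"
        using Cons.IH[OF sx] by blast
      note IH = this
      have fc: "filter (\<lambda>y. y \<le> x) (a # ys) = a # filter (\<lambda>y. y \<le> x) ys" for ys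
        using True by (simp only: filter.simps True if_True)
      have e0: "take k (a # xs) = a # take k' xs" by (simp only: Suc take_Suc_Cons)
      have e1: "filter (\<lambda>y. y \<le> x) (take k (a # xs)) = a # filter (\<lambda>y. y \<le> x) (take k' xs)"
        unfolding e0 by (rule fc)
      have e2: "filter (\<lambda>y. y \<le> x) (a # xs) = a # filter (\<lambda>y. y \<le> x) xs"
        by (rule fc)
      show ?thesis unfolding e1 e2 length_Cons IH by (simp only: Suc min_Suc_Suc)
    next
      case False
      have f1: "filter (\<lambda>y. y \<le> x) (a # xs) = []" using False ax by (auto simp: filter_empty_conv)
      have "\<forall>y\<in>set (a # xs). \<not> y \<le> x" using ax False by fastforce
      then have "\<forall>y\<in>set (take k (a # xs)). \<not> y \<le> x" by (metis in_set_takeD)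
      then have f2: "filter (\<lambda>y. y \<le> x) (take k (a # xs)) = []" by (simp add: filter_empty_conv)
      show ?thesis using f1 f2 by simp
    qed
  qed
qed

lemma len_sl: "length (sorted_list_of_multiset m) = size m"
  by (metis mset_sorted_list_of_multiset size_mset)

lemma size_trunc: "size (trunc k m) = min k (size m)"
  unfolding trunc_def by (simp add: len_sl)

lemma trunc_sub: "trunc k m \<subseteq># m"
proof -
  have "m = mset (take k (sorted_list_of_multiset m)) + mset (drop k (sorted_list_of_multiset m))"
    by (simp flip: mset_append)
  then show ?thesis unfolding trunc_def by (metis mset_subset_eq_add_left)
qed

lemma cnt_trunc: "cnt x (trunc k m) = min k (cnt x m)"
proof -
  have "cnt x m = length (filter (\<lambda>y. y \<le> x) (sorted_list_of_multiset m))"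
    using cnt_mset[of x "sorted_list_of_multiset m"] by simp
  then show ?thesis unfolding trunc_def cnt_mset by (simp add: sorted_filter_take)
qed

lemma trunc_all: "size m \<le> k \<Longrightarrow> trunc k m = m"
  unfolding trunc_def by (simp add: len_sl)

lemma filter_all: "(\<And>y. y \<in># a \<Longrightarrow> y \<le> x) \<Longrightarrow> cnt x a = size a"
  unfolding cnt_def by (metis filter_mset_cong filter_mset_True)

lemma trunc_sum:
  assumes "size a = k" "\<And>y z. y \<in># a \<Longrightarrow> z \<in># b \<Longrightarrow> y \<le> z"
  shows "trunc k (a + b) = a"
proof (rule cnt_ext)
  fix x
  show "cnt x (trunc k (a + b)) = cnt x a"
  proof (cases "cnt x b = 0")
    case True
    then show ?thesis using cnt_le_size[of x a] assms(1) by (simp add: cnt_trunc)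
  next
    case False
    then have "filter_mset (\<lambda>y. y \<le> x) b \<noteq> {#}" unfolding cnt_def by auto
    then obtain z where z: "z \<in># b" "z \<le> x" by (auto simp: filter_mset_eq_mempty_iff)
    have "cnt x a = size a"
    proof (rule filter_all)
      fix y assume "y \<in># a" then show "y \<le> x" using assms(2)[of y z] z by simp
    qed
    then show ?thesis using assms(1) by (simp add: cnt_trunc)
  qed
qed


lemma dom_sub: "a \<subseteq># b \<Longrightarrow> dom a b"
  unfolding dom_def by (simp add: cnt_mono size_mset_mono)

lemma dom_trans: "dom a b \<Longrightarrow> dom b c \<Longrightarrow> dom a c"
  unfolding dom_def by (meson le_trans)

lemma dom_trunc_sub: assumes "a \<subseteq># u" "size a \<le> k" shows "dom a (trunc k u)"
proof -
  have "cnt x a \<le> k" for x using cnt_le_size[of x a] assms(2) by linarith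
  then show ?thesis unfolding dom_def using cnt_mono[of a u] \<open>size a \<le> k\<close> \<open>a \<subseteq># u\<close>
    by (auto simp: size_trunc cnt_trunc size_mset_mono)
qed

lemma dom_trunc_trunc:
  assumes "dom (trunc s g) (trunc s w)" "t \<le> s"
  shows "dom (trunc t g) (trunc t w)"
proof -
  have "min s (size g) \<le> min s (size w)" "\<And>x. min s (cnt x g) \<le> min s (cnt x w)"
    using assms(1) unfolding dom_def by (auto simp: size_trunc cnt_trunc)
  then have "min t (size g) \<le> min t (size w)" "\<And>x. min t (cnt x g) \<le> min t (cnt x w)"
    using assms(2) by (metis min.absorb1 min.bounded_iff min.cobounded1 min_def)+
  then show ?thesis unfolding dom_def by (auto simp: size_trunc cnt_trunc)
qed

lemma dom_idx:
  assumes "dom g h" "i < size g"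
  shows "sorted_list_of_multiset h ! i \<le> sorted_list_of_multiset g ! i"
proof -
  let ?a = "sorted_list_of_multiset g" and ?b = "sorted_list_of_multiset h"
  define x where "x = ?a ! i"
  have "i < length (filter (\<lambda>y. y \<le> x) ?a)"
    using sorted_nth_le_iff[of ?a i x] assms(2) by (simp add: len_sl x_def)
  then have "i < cnt x g" using cnt_mset[of x ?a] by simp
  also have "\<dots> \<le> cnt x h" using assms(1) unfolding dom_def by simp
  finally have "i < length (filter (\<lambda>y. y \<le> x) ?b)" using cnt_mset[of x ?b] by simp
  moreover have "i < length ?b" using assms unfolding dom_def by (simp add: len_sl)
  ultimately show ?thesis using sorted_nth_le_iff[of ?b i x] by (simp add: x_def)
qed

lemma monoms_sub: "h \<in> monoms n \<Longrightarrow> a \<subseteq># h \<Longrightarrow> a \<in> monoms n"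
  unfolding monoms_def by (auto dest: mset_subset_eqD)

lemma monoms_plus: "a \<in> monoms n \<Longrightarrow> b \<in> monoms n \<Longrightarrow> a + b \<in> monoms n"
  unfolding monoms_def by auto

lemma ideal_up:
  assumes "borel_ideal n B" "g \<in> B" "h \<in> monoms n" "g \<subseteq># h"
  shows "h \<in> B"
proof -
  have "h - g \<in> monoms n" using monoms_sub assms(3) by (metis diff_subset_eq_self)
  then have "g + (h - g) \<in> B" using assms(1,2) unfolding borel_ideal_def monomial_ideal_def by blast
  then show ?thesis using assms(4) by (metis subset_mset.add_diff_inverse)
qed

lemma borel_dom:
  assumes B: "borel_ideal n B" and g: "g \<in> B" and h: "h \<in> monoms n" and d: "dom g h"
  shows "h \<in> B"
proof -
  let ?a = "sorted_list_of_multiset g" and ?b = "sorted_list_of_multiset h"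
  define k where "k = size g"
  have kh: "k \<le> size h" using d unfolding dom_def k_def by simp
  have idx: "\<And>i. i < k \<Longrightarrow> ?b ! i \<le> ?a ! i" using dom_idx[OF d] k_def by simp
  define zs where "zs = zip (take k ?b) ?a"
  have lens: "length (take k ?b) = length ?a" using kh by (simp add: len_sl k_def)
  have le: "\<And>p q. (p, q) \<in> set zs \<Longrightarrow> p \<le> q"
  proof -
    fix p q assume "(p, q) \<in> set zs"
    then obtain i where "i < length zs" "zs ! i = (p, q)" by (metis in_set_conv_nth)
    then have "i < k" "p = ?b ! i" "q = ?a ! i" using lens unfolding zs_def
      by (auto simp: len_sl k_def)
    then show "p \<le> q" using idx by simp
  qed
  define P where "P = (\<lambda>(p::nat, q::nat). p < q)"
  define M where "M = mset zs"
  define ps where "ps = filter P zs"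
  have g_eq: "g = image_mset snd M" using lens unfolding M_def
    by (metis mset_map map_snd_zip mset_sorted_list_of_multiset zs_def)
  have t_eq: "mset (take k ?b) = image_mset fst M" using lens unfolding M_def
    by (metis mset_map map_fst_zip zs_def)
  have split: "\<And>f. image_mset f M = image_mset f (filter_mset P M) + image_mset f (filter_mset (\<lambda>x. \<not> P x) M)"
    by (metis image_mset_union multiset_partition)
  have eqQ: "image_mset snd (filter_mset (\<lambda>x. \<not> P x) M) = image_mset fst (filter_mset (\<lambda>x. \<not> P x) M)"
  proof (rule image_mset_cong)
    fix x assume "x \<in># filter_mset (\<lambda>x. \<not> P x) M"
    then have "x \<in> set zs" "\<not> P x" unfolding M_def by auto
    then show "snd x = fst x" using le[of "fst x" "snd x"] unfolding P_def by (cases x) auto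
  qed
  have snd_ps: "mset (map snd ps) = image_mset snd (filter_mset P M)"
    unfolding ps_def M_def by simp
  have fst_ps: "mset (map fst ps) = image_mset fst (filter_mset P M)"
    unfolding ps_def M_def by simp
  have c1: "\<forall>(i,j)\<in>set ps. i < j" unfolding ps_def P_def by auto
  have c2: "mset (map snd ps) \<subseteq># g"
    unfolding snd_ps using split[of snd] g_eq by (metis mset_subset_eq_add_left)
  have cond: "(\<forall>(i,j)\<in>set ps. i < j) \<and> mset (map snd ps) \<subseteq># g" using c1 c2 by blast
  then have "borel_move g ps \<in> B" using B g unfolding borel_ideal_def by blast
  moreover have "borel_move g ps = mset (take k ?b)"
  proof -
    have "borel_move g ps = image_mset snd (filter_mset (\<lambda>x. \<not> P x) M) + image_mset fst (filter_mset P M)"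
      unfolding borel_move_def snd_ps fst_ps using split[of snd] g_eq by simp
    also have "\<dots> = image_mset fst M" using split[of fst] eqQ by (simp add: add.commute)
    finally show ?thesis using t_eq by simp
  qed
  moreover have "mset (take k ?b) \<subseteq># h"
    by (metis append_take_drop_id mset_append mset_sorted_list_of_multiset mset_subset_eq_add_left)
  ultimately show ?thesis using ideal_up[OF B _ h] by simp
qed


lemma T_iff: "w \<in> trunc_ideal n s B \<longleftrightarrow> w \<in> monoms n \<and> (\<exists>g\<in>B. trunc s g \<subseteq># w)"
  unfolding trunc_ideal_def ideal_gen_def by auto

lemma B_monoms: "borel_ideal n B \<Longrightarrow> B \<subseteq> monoms n"
  unfolding borel_ideal_def monomial_ideal_def by blast

lemma cnt_pos: "z \<in># a \<Longrightarrow> 1 \<le> cnt z a"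
proof -
  assume "z \<in># a"
  then have "filter_mset (\<lambda>y. y \<le> z) a \<noteq> {#}" by (auto simp: filter_mset_eq_mempty_iff)
  then have "size (filter_mset (\<lambda>y. y \<le> z) a) \<noteq> 0" by simp
  then show ?thesis unfolding cnt_def by linarith
qed

lemma sub_eq_size: "a \<subseteq># b \<Longrightarrow> size b \<le> size a \<Longrightarrow> a = b"
  using mset_subset_size subset_mset.le_less by fastforce

lemma TB:
  assumes B: "borel_ideal n B" and g: "g \<in> B" and w: "w \<in> monoms n"
    and d: "dom (trunc s g) w"
  shows "w \<in> trunc_ideal n s B"
proof (cases "size g \<le> s")
  case True
  then have "dom g w" using d trunc_all by simp
  then have "w \<in> B" using borel_dom[OF B g w] by simp
  then show ?thesis using w trunc_sub T_iff by blast
next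
  case False
  define w' where "w' = trunc s w"
  define tl where "tl = g - trunc s g"
  have st: "size (trunc s g) = s" using False by (simp add: size_trunc)
  have sw: "s \<le> size w" using d st unfolding dom_def by simp
  have sw': "size w' = s" using sw by (simp add: w'_def size_trunc)
  have cw': "cnt x (trunc s g) \<le> cnt x w'" for x
  proof -
    have "cnt x (trunc s g) \<le> s" using cnt_le_size[of x "trunc s g"] st by simp
    moreover have "cnt x (trunc s g) \<le> cnt x w" using d unfolding dom_def by simp
    ultimately show ?thesis by (simp add: w'_def cnt_trunc)
  qed
  have gdec: "g = trunc s g + tl" unfolding tl_def using trunc_sub
    by (metis subset_mset.add_diff_inverse)
  define g' where "g' = w' + tl"
  have gm: "g \<in> monoms n" using B_monoms[OF B] g by blast
  have g'm: "g' \<in> monoms n" unfolding g'_def w'_def tl_def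
    using monoms_plus monoms_sub[OF w trunc_sub] monoms_sub[OF gm] by (metis diff_subset_eq_self)
  have "dom g g'"
  proof -
    have "size g = size g'" using gdec st sw' unfolding g'_def by (metis size_union)
    moreover have "cnt x g \<le> cnt x g'" for x
      using gdec cw'[of x] unfolding g'_def by (metis add_le_cancel_right cnt_plus)
    ultimately show ?thesis unfolding dom_def by simp
  qed
  then have g'B: "g' \<in> B" using borel_dom[OF B g g'm] by simp
  have "trunc s g' = w'" unfolding g'_def
  proof (rule trunc_sum[OF sw'])
    fix y z assume y: "y \<in># w'" and z: "z \<in># tl"
    show "y \<le> z"
    proof (rule ccontr)
      assume yz: "\<not> y \<le> z"
      have "cnt z g = cnt z (trunc s g) + cnt z tl" using gdec by (metis cnt_plus)
      moreover have "1 \<le> cnt z tl" using cnt_pos[OF z] .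
      ultimately have "cnt z (trunc s g) = s" using cnt_trunc[of z s g] by linarith
      then have "s \<le> cnt z w'" using cw'[of z] by simp
      then have "cnt z w' = size w'" using sw' cnt_le_size[of z w'] by simp
      then have "y \<le> z" using cnt_eq_size y by blast
      then show False using yz by simp
    qed
  qed
  then have "trunc s g' \<subseteq># w" using trunc_sub w'_def by simp
  then show ?thesis using g'B w T_iff by blast
qed

lemma T_up:
  assumes B: "borel_ideal n B" and "w' \<in> trunc_ideal n s B" "w \<in> monoms n" "dom w' w"
  shows "w \<in> trunc_ideal n s B"
proof -
  obtain g where "g \<in> B" "trunc s g \<subseteq># w'" using assms(2) T_iff by blast
  then show ?thesis using TB[OF B \<open>g \<in> B\<close> assms(3)] dom_trans dom_sub assms(4) by blast
qed

lemma T_down: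
  assumes B: "borel_ideal n B" and w: "w \<in> monoms n" and "trunc s w \<in> trunc_ideal n s B" "t \<le> s"
  shows "trunc t w \<in> trunc_ideal n t B"
proof -
  obtain g where g: "g \<in> B" "trunc s g \<subseteq># trunc s w" using assms(3) T_iff by blast
  then have "dom (trunc t g) (trunc t w)" using dom_trunc_trunc dom_sub assms(4) by blast
  then show ?thesis using TB[OF B g(1)] monoms_sub[OF w trunc_sub] by blast
qed

lemma K1:
  assumes B: "borel_ideal n B" and gen: "generated_in_degrees_le B d" and g: "g \<in> B"
  shows "trunc d g \<in> B"
proof -
  obtain g0 where g0: "g0 \<in> B" "g0 \<subseteq># g" "size g0 \<le> d" using gen g
    unfolding generated_in_degrees_le_def by blast
  have "dom g0 (trunc d g)" using dom_trunc_sub g0 by blast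
  moreover have "trunc d g \<in> monoms n" using monoms_sub trunc_sub B_monoms[OF B] g by blast
  ultimately show ?thesis using borel_dom[OF B g0(1)] by blast
qed

lemma small_in_B:
  assumes B: "borel_ideal n B" and "w \<in> trunc_ideal n s B" "size w < s"
  shows "w \<in> B"
proof -
  obtain g where g: "g \<in> B" "trunc s g \<subseteq># w" and w: "w \<in> monoms n" using assms(2) T_iff by blast
  have "size (trunc s g) < s" using g(2) assms(3) size_mset_mono by fastforce
  then have "size g < s" by (simp add: size_trunc)
  then have "trunc s g = g" by (simp add: trunc_all)
  then show ?thesis using ideal_up[OF B g(1) w] g(2) by simp
qed


lemma Mset_T: "m \<in> Mset n B s \<Longrightarrow> m \<in> trunc_ideal n s B"
  unfolding Mset_def min_gens_def by blast

lemma Mset_props: "m \<in> Mset n B s \<Longrightarrow> size m = s \<and> m \<notin> B \<and> m \<in> monoms n"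
  unfolding Mset_def min_gens_def using T_iff by blast

lemma Zlem:
  assumes B: "borel_ideal n B" and m: "m \<in> Mset n B s" and j: "j \<in> Zvars n B s m"
    and y: "y \<in># m"
  shows "y < j"
proof (rule ccontr)
  assume "\<not> y < j"
  then have jy: "j \<le> y" by simp
  obtain g where g: "g \<in> B" "trunc s g \<subseteq># m" using Mset_T[OF m] T_iff by blast
  have sm: "size m = s" "m \<notin> B" "m \<in> monoms n" using Mset_props[OF m] by auto
  have "\<not> size g \<le> s"
  proof
    assume "size g \<le> s"
    then have "trunc s g = g" by (simp add: trunc_all)
    then show False using ideal_up[OF B g(1) sm(3)] g(2) sm(2) by simp
  qed
  then have "size (trunc s g) = s" by (simp add: size_trunc)
  then have mg: "m = trunc s g" using sub_eq_size[OF g(2)] sm(1) by simp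
  have jn: "j < n" and notin: "m + {#j#} \<notin> trunc_ideal n (Suc s) B"
    using j unfolding Zvars_def by auto
  have "{#j#} \<in> monoms n" using jn by (simp add: monoms_def)
  then have mj: "m + {#j#} \<in> monoms n" using monoms_plus[OF sm(3)] by blast
  have tg: "trunc (Suc s) g \<in> trunc_ideal n (Suc s) B"
    using T_iff g(1) monoms_sub trunc_sub B_monoms[OF B] by blast
  have "dom (trunc (Suc s) g) (m + {#j#})"
  proof -
    have "size (trunc (Suc s) g) \<le> size (m + {#j#})" using sm(1) by (simp add: size_trunc)
    moreover have "cnt x (trunc (Suc s) g) \<le> cnt x (m + {#j#})" for x
    proof (cases "j \<le> x")
      case True
      then show ?thesis using mg by (simp add: cnt_trunc)
    next
      case False
      then have "\<not> y \<le> x" using jy by simp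
      then have "cnt x m \<noteq> size m" using cnt_eq_size y by blast
      then have "cnt x m < s" using cnt_le_size[of x m] sm(1) by simp
      then have "cnt x g < s" using mg by (simp add: cnt_trunc)
      then show ?thesis using False mg by (simp add: cnt_trunc)
    qed
    ultimately show ?thesis unfolding dom_def by simp
  qed
  then have "m + {#j#} \<in> trunc_ideal n (Suc s) B" using T_up[OF B tg mj] by simp
  then show False using notin by simp
qed

lemma cell_lem:
  assumes B: "borel_ideal n B" and m: "m \<in> Mset n B s"
    and v: "set_mset v \<subseteq> Zvars n B s m"
  shows "trunc s (m + v) = m"
    and "v \<noteq> {#} \<Longrightarrow> trunc (Suc s) (m + v) \<notin> trunc_ideal n (Suc s) B"
    and "m + v \<in> monoms n"
    and "m + v \<notin> B"
    and "size (m + v) = s + size v"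
proof -
  have sm: "size m = s" "m \<notin> B" "m \<in> monoms n" using Mset_props[OF m] by auto
  show t: "trunc s (m + v) = m"
    using trunc_sum[OF sm(1)] Zlem[OF B m] v by (meson less_imp_le subsetD)
  have vm: "v \<in> monoms n" using v unfolding Zvars_def monoms_def by auto
  show um: "m + v \<in> monoms n" using monoms_plus[OF sm(3) vm] .
  show "size (m + v) = s + size v" using sm(1) by simp
  show nt: "trunc (Suc s) (m + v) \<notin> trunc_ideal n (Suc s) B" if vne: "v \<noteq> {#}"
  proof
    assume tin: "trunc (Suc s) (m + v) \<in> trunc_ideal n (Suc s) B"
    define j where "j = Min (set_mset v)"
    have jv: "j \<in># v" using vne unfolding j_def by (simp add: Min_in)
    have jmin: "\<And>z. z \<in># v \<Longrightarrow> j \<le> z" unfolding j_def by simp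
    have jZ: "j \<in> Zvars n B s m" using jv v by blast
    then have jn: "j < n" and notin: "m + {#j#} \<notin> trunc_ideal n (Suc s) B"
      unfolding Zvars_def by auto
    have "{#j#} \<in> monoms n" using jn by (simp add: monoms_def)
  then have mj: "m + {#j#} \<in> monoms n" using monoms_plus[OF sm(3)] by blast
    have sv: "1 \<le> size v" using vne by (simp add: Suc_leI nonempty_has_size)
    have "dom (trunc (Suc s) (m + v)) (m + {#j#})"
    proof -
      have "size (trunc (Suc s) (m + v)) \<le> size (m + {#j#})" using sm(1) by (simp add: size_trunc)
      moreover have "cnt x (trunc (Suc s) (m + v)) \<le> cnt x (m + {#j#})" for x
      proof (cases "j \<le> x")
        case True
        have "cnt x m = size m"
        proof (rule filter_all)
          fix y assume "y \<in># m"
          then have "y < j" using Zlem[OF B m jZ] by blast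
          then show "y \<le> x" using True by simp
        qed
        then show ?thesis using sm(1) True by (simp add: cnt_trunc)
      next
        case False
        then have "cnt x v = 0" using jmin by (intro cnt_zero) (meson le_trans not_le)
        then show ?thesis using False by (simp add: cnt_trunc)
      qed
      ultimately show ?thesis unfolding dom_def by simp
    qed
    then show False using T_up[OF B tin mj] notin by simp
  qed
  show "m + v \<notin> B"
  proof
    assume uB: "m + v \<in> B"
    show False
    proof (cases "v = {#}")
      case True then show False using uB sm(2) by simp
    next
      case False
      have "trunc (Suc s) (m + v) \<in> trunc_ideal n (Suc s) B"
        using T_iff uB monoms_sub[OF um trunc_sub] by blast
      then show False using nt[OF False] by simp
    qed
  qed
qed


lemma existence:
  assumes B: "borel_ideal n B" and ne: "B \<noteq> {}" and gen: "generated_in_degrees_le B d"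
    and u: "u \<in> monoms n" and uB: "u \<notin> B"
  shows "\<exists>s<d. \<exists>m\<in>Mset n B s. u \<in> cell m (Zvars n B s m)"
proof -
  define P where "P = (\<lambda>s. trunc s u \<in> trunc_ideal n s B)"
  have tu: "\<And>t. trunc t u \<in> monoms n" using monoms_sub[OF u trunc_sub] .
  have P0: "P 0"
  proof -
    obtain g where "g \<in> B" using ne by blast
    moreover have "trunc 0 g = {#}" "trunc 0 u = {#}" unfolding trunc_def by simp_all
    ultimately show ?thesis unfolding P_def using T_iff tu by (metis subset_mset.order_refl)
  qed
  have Pd: "s < d" if "P s" for s
  proof (rule ccontr)
    assume "\<not> s < d"
    then have "P d" using T_down[OF B u] that unfolding P_def by simp
    then obtain g where g: "g \<in> B" "trunc d g \<subseteq># trunc d u" unfolding P_def using T_iff by blast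
    have "trunc d g \<in> B" using K1[OF B gen g(1)] .
    then have "trunc d u \<in> B" using ideal_up[OF B _ tu g(2)] by simp
    then have "u \<in> B" using ideal_up[OF B _ u trunc_sub] by simp
    then show False using uB by simp
  qed
  have Psz: "s \<le> size u" if "P s" for s
  proof (rule ccontr)
    assume "\<not> s \<le> size u"
    then have "trunc s u = u" by (simp add: trunc_all)
    then have "u \<in> B" using small_in_B[OF B] that \<open>\<not> s \<le> size u\<close> unfolding P_def by simp
    then show False using uB by simp
  qed
  define s where "s = Greatest P"
  have Ps: "P s" unfolding s_def using GreatestI_nat[of P 0 d] P0 Pd by (meson less_imp_le)
  have Pmax: "\<And>t. P t \<Longrightarrow> t \<le> s" unfolding s_def using Greatest_le_nat[of P _ d] Pd
    by (meson less_imp_le)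
  have sd: "s < d" using Pd Ps .
  define m where "m = trunc s u"
  define v where "v = u - m"
  have szm: "size m = s" using Psz[OF Ps] unfolding m_def by (simp add: size_trunc)
  have mT: "m \<in> trunc_ideal n s B" using Ps unfolding P_def m_def .
  have mm: "m \<in> monoms n" using tu m_def by simp
  have mnB: "m \<notin> B" using ideal_up[OF B _ u trunc_sub] uB m_def by blast
  have uv: "u = m + v" unfolding v_def m_def using trunc_sub by (metis subset_mset.add_diff_inverse)
  have mM: "m \<in> Mset n B s"
  proof -
    have "\<forall>m'\<in>trunc_ideal n s B. m' \<subseteq># m \<longrightarrow> m' = m"
    proof (intro ballI impI)
      fix m' assume m': "m' \<in> trunc_ideal n s B" "m' \<subseteq># m"
      have "\<not> size m' < s"
      proof
        assume "size m' < s"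
        then have "m' \<in> B" using small_in_B[OF B m'(1)] by simp
        then have "m \<in> B" using ideal_up[OF B _ mm m'(2)] by simp
        then show False using mnB by simp
      qed
      then show "m' = m" using sub_eq_size[OF m'(2)] szm by simp
    qed
    then show ?thesis unfolding Mset_def min_gens_def using mT szm mnB by blast
  qed
  have vZ: "set_mset v \<subseteq> Zvars n B s m"
  proof
    fix j assume jv: "j \<in># v"
    have jn: "j < n" using jv u uv unfolding monoms_def by auto
    have "m + {#j#} \<notin> trunc_ideal n (Suc s) B"
    proof
      assume mjT: "m + {#j#} \<in> trunc_ideal n (Suc s) B"
      have "m + {#j#} \<subseteq># u" using jv uv by simp
      then have "dom (m + {#j#}) (trunc (Suc s) u)" using szm dom_trunc_sub by simp
      then have "P (Suc s)" using T_up[OF B mjT tu] unfolding P_def by simp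
      then show False using Pmax by fastforce
    qed
    then show "j \<in> Zvars n B s m" unfolding Zvars_def using jn by simp
  qed
  have "u \<in> cell m (Zvars n B s m)" unfolding cell_def using uv vZ by blast
  then show ?thesis using sd mM by blast
qed

theorem theorem4p1:
  fixes n d :: nat and B :: "nat multiset set"
  assumes "borel_ideal n B"
    and "B \<noteq> {}"
    and "{#} \<notin> B"
    and "generated_in_degrees_le B d"
  shows "{u \<in> monoms n. u \<notin> B} =
           (\<Union>s\<in>{..<d}. \<Union>m\<in>Mset n B s. cell m (Zvars n B s m))
    \<and> disjoint_family_on (\<lambda>(s, m). cell m (Zvars n B s m))
                          (SIGMA s:{..<d}. Mset n B s)"
proof
  note B = assms(1)
  show "{u \<in> monoms n. u \<notin> B} =
           (\<Union>s\<in>{..<d}. \<Union>m\<in>Mset n B s. cell m (Zvars n B s m))"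
  proof
    show "{u \<in> monoms n. u \<notin> B} \<subseteq> (\<Union>s\<in>{..<d}. \<Union>m\<in>Mset n B s. cell m (Zvars n B s m))"
      using existence[OF B assms(2) assms(4)] by blast
    show "(\<Union>s\<in>{..<d}. \<Union>m\<in>Mset n B s. cell m (Zvars n B s m)) \<subseteq> {u \<in> monoms n. u \<notin> B}"
    proof
      fix u assume "u \<in> (\<Union>s\<in>{..<d}. \<Union>m\<in>Mset n B s. cell m (Zvars n B s m))"
      then obtain s m v where m: "m \<in> Mset n B s" and v: "set_mset v \<subseteq> Zvars n B s m"
        and u: "u = m + v" unfolding cell_def by blast
      show "u \<in> {u \<in> monoms n. u \<notin> B}" using cell_lem(3,4)[OF B m v] u by simp
    qed
  qed
  have nodisj: False if m: "m \<in> Mset n B s" and m': "m' \<in> Mset n B s'" and ss: "s < s'"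
    and u1: "u \<in> cell m (Zvars n B s m)" and u2: "u \<in> cell m' (Zvars n B s' m')" for s s' m m' u
  proof -
    obtain v where v: "set_mset v \<subseteq> Zvars n B s m" "u = m + v" using u1 unfolding cell_def by blast
    obtain v' where v': "set_mset v' \<subseteq> Zvars n B s' m'" "u = m' + v'" using u2 unfolding cell_def by blast
    have t': "trunc s' u = m'" using cell_lem(1)[OF B m' v'(1)] v'(2) by simp
    have sz: "size u = s' + size v'" using cell_lem(5)[OF B m' v'(1)] v'(2) by simp
    have sz2: "size u = s + size v" using cell_lem(5)[OF B m v(1)] v(2) by simp
    have vne: "v \<noteq> {#}" using sz sz2 ss by auto
    have um: "u \<in> monoms n" using cell_lem(3)[OF B m v(1)] v(2) by simp
    have "trunc s' u \<in> trunc_ideal n s' B" using t' Mset_T[OF m'] by simp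
    then have "trunc (Suc s) u \<in> trunc_ideal n (Suc s) B" using T_down[OF B um] ss by simp
    then show False using cell_lem(2)[OF B m v(1) vne] v(2) by simp
  qed
  show "disjoint_family_on (\<lambda>(s, m). cell m (Zvars n B s m)) (SIGMA s:{..<d}. Mset n B s)"
    unfolding disjoint_family_on_def
  proof (intro ballI impI)
    fix p q assume p: "p \<in> (SIGMA s:{..<d}. Mset n B s)" and q: "q \<in> (SIGMA s:{..<d}. Mset n B s)"
      and pq: "p \<noteq> q"
    obtain s m where pe: "p = (s, m)" and m: "m \<in> Mset n B s" using p by blast
    obtain s' m' where qe: "q = (s', m')" and m': "m' \<in> Mset n B s'" using q by blast
    show "(\<lambda>(s, m). cell m (Zvars n B s m)) p \<inter> (\<lambda>(s, m). cell m (Zvars n B s m)) q = {}"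
    proof (rule ccontr)
      assume "(\<lambda>(s, m). cell m (Zvars n B s m)) p \<inter> (\<lambda>(s, m). cell m (Zvars n B s m)) q \<noteq> {}"
      then obtain u where u1: "u \<in> cell m (Zvars n B s m)" and u2: "u \<in> cell m' (Zvars n B s' m')"
        using pe qe by auto
      show False
      proof (cases s s' rule: linorder_cases)
        case less show False by (rule nodisj[OF m m' less u1 u2])
      next
        case greater show False by (rule nodisj[OF m' m greater u2 u1])
      next
        case equal
        obtain v where v: "set_mset v \<subseteq> Zvars n B s m" "u = m + v" using u1 unfolding cell_def by blast
        obtain v' where v': "set_mset v' \<subseteq> Zvars n B s' m'" "u = m' + v'" using u2 unfolding cell_def by blast
        have "m = trunc s u" using cell_lem(1)[OF B m v(1)] v(2) by simp
        moreover have "m' = trunc s u" using cell_lem(1)[OF B m' v'(1)] v'(2) equal by simp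
        ultimately show False using pq pe qe equal by simp
      qed
    qed
  qed
qed

end
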